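(* Let $v$ be any Borel measurable function from $[0,T]\times\mathbb{R}^d$ to $\mathbb{R}$ such that $$\int_0^T \mathbb{E}\Big[\Big|\inf_{\kappa\in U} H\big(t,X_t,\kappa,\partial_x v(t,X_t),\partial_{xx}^2 v(t,X_t)\big)\Big|\Big]\,\mathrm{d}t<\infty.$$ Assume the optimal feedback control exists under $v$, i.e. there is $u\in\mathcal{U}_{\mathrm{ad}}$ with $$H_t^{u,v}=\inf_{\kappa\in U} H\big(t,X_t,\kappa,\partial_x v(t,X_t),\partial_{xx}^2 v(t,X_t)\big)\quad (\ast)$$ for $(t,\omega)\in[0,T]\times\Omega$, a.e.-$\mathrm{d}t\times\mathbb{P}$. Then a control $u$ satisfying $(\ast)$ can be found from the minimization problem: find $u\in\mathcal{U}_{\mathrm{ad}}$ such that $$\int_0^T\mathbb{E}[H_t^{u,v}]\,\mathrm{d}t=\inf_{\bar u\in\mathcal{U}_{\mathrm{ad}}}\int_0^T\mathbb{E}[H_t^{\bar u,v}]\,\mathrm{d}t;$$ i.e. this minimization problem has a solution, and any solution satisfies $(\ast)$ a.e.-$\mathrm{d}t\times\mathbb{P}$.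
   Context: Let $(\Omega,\mathcal{F},\mathbb{F}^B,\mathbb{P})$ be a filtered complete probability space with $\mathbb{F}^B=(\mathcal{F}_t)_{0\le t\le T}$ the natural filtration of a standard $q$-dimensional Brownian motion $B$, and $T\in(0,\infty)$. Let $U\subset\mathbb{R}^m$ and let $\mathcal{U}_{\mathrm{ad}}$ be the set of Borel measurable functions $u:[0,T]\times\mathbb{R}^d\to U$. Let $H:[0,T]\times\mathbb{R}^d\times U\times\mathbb{R}^d\times\mathbb{R}^{d\times d}\to\mathbb{R}$, $(t,x,\kappa,z,p)\mapsto H(t,x,\kappa,z,p)$, be the Hamiltonian of the HJB-type equation $\partial_t v+\mathcal{L}v+\inf_{\kappa\in U}H(t,x,\kappa,\partial_x v,\partial_{xx}^2 v)=0$, where $\mathcal{L}=\mu^\top(t,x)\partial_x+\frac12\operatorname{Tr}[\sigma\sigma^\top(t,x)\partial_{xx}^2]$ for given $\mu:[0,T]\times\mathbb{R}^d\to\mathbb{R}^d$, $\sigma:[0,T]\times\mathbb{R}^d\to\mathbb{R}^{d\times q}$. Let $X$ be the uncontrolled diffusion $X_t=X_0+\int_0^t\mu(s,X_s)\,\mathrm{d}s+\int_0^t\sigma(s,X_s)\,\mathrm{d}B_s$, $t\in[0,T]$. For $u\in\mathcal{U}_{\mathrm{ad}}$ and $v$, the Hamiltonian process is $H_t^{u,v}:=H\big(t,X_t,u(t,X_t),\partial_x v(t,X_t),\partial_{xx}^2 v(t,X_t)\big)$ (with $\partial_x$ the gradient and $\partial_{xx}^2$ the Hessian in $x$). *)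

theory Defs
  imports "HOL-Probability.Probability"
begin

definition pgrad :: "(real \<Rightarrow> real^'d \<Rightarrow> real) \<Rightarrow> real \<Rightarrow> real^'d \<Rightarrow> real^'d" where
  "pgrad v t x = (\<chi> i. deriv (\<lambda>s. v t (x + s *\<^sub>R axis i 1)) 0)"

definition phess :: "(real \<Rightarrow> real^'d \<Rightarrow> real) \<Rightarrow> real \<Rightarrow> real^'d \<Rightarrow> real^'d^'d" where
  "phess v t x = (\<chi> i j. deriv (\<lambda>s. pgrad v t (x + s *\<^sub>R axis j 1) $ i) 0)"

definition admissible :: "(real^'m) set \<Rightarrow> (real \<Rightarrow> real^'d \<Rightarrow> real^'m) \<Rightarrow> bool" where
  "admissible U u \<longleftrightarrow> (\<lambda>(t, x). u t x) \<in> borel_measurable borel \<and> (\<forall>t x. u t x \<in> U)"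

definition hamproc ::
  "(real \<Rightarrow> real^'d \<Rightarrow> real^'m \<Rightarrow> real^'d \<Rightarrow> real^'d^'d \<Rightarrow> real)
   \<Rightarrow> (real \<Rightarrow> 'a \<Rightarrow> real^'d) \<Rightarrow> (real \<Rightarrow> real^'d \<Rightarrow> real)
   \<Rightarrow> (real \<Rightarrow> real^'d \<Rightarrow> real^'m) \<Rightarrow> real \<Rightarrow> 'a \<Rightarrow> real" where
  "hamproc H X v u t \<omega> =
     H t (X t \<omega>) (u t (X t \<omega>)) (pgrad v t (X t \<omega>)) (phess v t (X t \<omega>))"

text \<open>The infimum over U of the Hamiltonian along X (extended-real valued, so that
  an unbounded-below set gives -infinity).\<close>

definition infham ::
  "(real \<Rightarrow> real^'d \<Rightarrow> real^'m \<Rightarrow> real^'d \<Rightarrow> real^'d^'d \<Rightarrow> real) \<Rightarrow> (real^'m) set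
   \<Rightarrow> (real \<Rightarrow> 'a \<Rightarrow> real^'d) \<Rightarrow> (real \<Rightarrow> real^'d \<Rightarrow> real) \<Rightarrow> real \<Rightarrow> 'a \<Rightarrow> ereal" where
  "infham H U X v t \<omega> =
     (INF \<kappa>\<in>U. ereal (H t (X t \<omega>) \<kappa> (pgrad v t (X t \<omega>)) (phess v t (X t \<omega>))))"

definition time_exp_integral :: "'a measure \<Rightarrow> real \<Rightarrow> (real \<Rightarrow> 'a \<Rightarrow> real) \<Rightarrow> ereal" where
  "time_exp_integral M T f =
     enn2ereal (\<integral>\<^sup>+ t. indicator {0..T} t * (\<integral>\<^sup>+ \<omega>. ennreal (f t \<omega>) \<partial>M) \<partial>lborel)
   - enn2ereal (\<integral>\<^sup>+ t. indicator {0..T} t * (\<integral>\<^sup>+ \<omega>. ennreal (- f t \<omega>) \<partial>M) \<partial>lborel)"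

end

theory Submission
  imports Defs
begin

abbreviation "NT T \<equiv> restrict_space (lborel::real measure) {0..T}"

definition Ip :: "'a measure \<Rightarrow> real \<Rightarrow> (real \<Rightarrow> 'a \<Rightarrow> ennreal) \<Rightarrow> ennreal" where
  "Ip M T F = (\<integral>\<^sup>+ t. indicator {0..T} t * (\<integral>\<^sup>+ \<omega>. F t \<omega> \<partial>M) \<partial>lborel)"

lemma Ip_restrict: "Ip M T F = (\<integral>\<^sup>+ t. (\<integral>\<^sup>+ \<omega>. F t \<omega> \<partial>M) \<partial>NT T)"
  unfolding Ip_def by (subst nn_integral_restrict_space) (auto simp: mult.commute)

lemma pair_sf:
  assumes "prob_space M"
  shows "pair_sigma_finite (NT T) M"
proof -
  have "sigma_finite_measure (NT T)"
    by (rule sigma_finite_measure_restrict_space) (auto simp: lborel.sigma_finite_measure_axioms)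
  moreover have "sigma_finite_measure M" using assms
    by (simp add: prob_space_imp_sigma_finite)
  ultimately show ?thesis by (simp add: pair_sigma_finite_def)
qed

lemma Ip_mono_AE:
  assumes "prob_space M"
    and "AE p in NT T \<Otimes>\<^sub>M M. F (fst p) (snd p) \<le> G (fst p) (snd p)"
  shows "Ip M T F \<le> Ip M T G"
proof -
  interpret pair_sigma_finite "NT T" M using pair_sf[OF assms(1)] .
  have "AE t in NT T. AE \<omega> in M. F t \<omega> \<le> G t \<omega>"
    using AE_pair[OF assms(2)] by simp
  then have "AE t in NT T. (\<integral>\<^sup>+ \<omega>. F t \<omega> \<partial>M) \<le> (\<integral>\<^sup>+ \<omega>. G t \<omega> \<partial>M)"
    by eventually_elim (rule nn_integral_mono_AE)
  then show ?thesis unfolding Ip_restrict by (rule nn_integral_mono_AE)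
qed

lemma Ip_prod:
  assumes "prob_space M"
    and "(\<lambda>p. F (fst p) (snd p)) \<in> borel_measurable (NT T \<Otimes>\<^sub>M M)"
  shows "Ip M T F = (\<integral>\<^sup>+ p. F (fst p) (snd p) \<partial>(NT T \<Otimes>\<^sub>M M))"
proof -
  interpret pair_sigma_finite "NT T" M using pair_sf[OF assms(1)] .
  show ?thesis unfolding Ip_restrict
    using M2.nn_integral_fst[OF assms(2)] by simp
qed

lemma ae_eq_from_int:
  assumes "F \<in> borel_measurable N" "G \<in> borel_measurable N"
    and "integral\<^sup>N N F = integral\<^sup>N N G" "integral\<^sup>N N G \<noteq> \<infinity>"
    and "AE x in N. G x \<le> F x"
  shows "AE x in N. F x = G x"
proof -
  have "(\<integral>\<^sup>+ x. F x - G x \<partial>N) = 0"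
    using nn_integral_diff[OF assms(1,2,4,5)] assms(3,4)
    by (metis ennreal_add_diff_cancel add.left_neutral)
  then have "AE x in N. F x - G x = 0"
    using nn_integral_0_iff_AE[of "\<lambda>x. F x - G x" N] assms(1,2) by simp
  with assms(5) show ?thesis
    by eventually_elim (auto dest: ennreal_minus_eq_0 intro: order.antisym)
qed

lemma ennreal_arith:
  fixes a b a0 b0 :: ennreal
  assumes "a0 \<le> a" "b \<le> b0" "a0 < \<infinity>" "b0 < \<infinity>"
    "enn2ereal a - enn2ereal b = enn2ereal a0 - enn2ereal b0"
  shows "a = a0 \<and> b = b0"
proof -
  have fin: "b < \<infinity>" using assms(2,4) by (meson le_less_trans)
  have fa: "a < \<infinity>"
  proof (rule ccontr)
    assume "\<not> a < \<infinity>"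
    then have "a = \<infinity>" by (simp add: not_less top_unique)
    moreover obtain y where "b = ennreal y" "y \<ge> 0" using fin by (cases b) auto
    moreover obtain x0 where "a0 = ennreal x0" "x0 \<ge> 0" using assms(3) by (cases a0) auto
    moreover obtain y0 where "b0 = ennreal y0" "y0 \<ge> 0" using assms(4) by (cases b0) auto
    ultimately show False using assms(5) by simp
  qed
  obtain x where x: "a = ennreal x" "x \<ge> 0" using fa by (cases a) auto
  obtain y where y: "b = ennreal y" "y \<ge> 0" using fin by (cases b) auto
  obtain x0 where x0: "a0 = ennreal x0" "x0 \<ge> 0" using assms(3) by (cases a0) auto
  obtain y0 where y0: "b0 = ennreal y0" "y0 \<ge> 0" using assms(4) by (cases b0) auto
  have e: "x - y = x0 - y0" using assms(5) x y x0 y0 by simp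
  have "x0 \<le> x" "y \<le> y0" using assms(1,2) x y x0 y0 by auto
  then have "x = x0" "y = y0" using e by linarith+
  then show ?thesis using x y x0 y0 by simp
qed

lemma ham_meas:
  fixes M :: "'a measure" and T :: real
    and H :: "real \<Rightarrow> real^'d \<Rightarrow> real^'m \<Rightarrow> real^'d \<Rightarrow> real^'d^'d \<Rightarrow> real"
    and X :: "real \<Rightarrow> 'a \<Rightarrow> real^'d"
    and v :: "real \<Rightarrow> real^'d \<Rightarrow> real"
  assumes X_meas: "(\<lambda>(t, \<omega>). X t \<omega>) \<in> borel_measurable (borel \<Otimes>\<^sub>M M)"
    and H_meas: "(\<lambda>(t, x, \<kappa>, z, p). H t x \<kappa> z p) \<in> borel_measurable borel"
    and grad_meas: "(\<lambda>(t, x). pgrad v t x) \<in> borel_measurable borel"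
    and hess_meas: "(\<lambda>(t, x). phess v t x) \<in> borel_measurable borel"
    and adm: "admissible U u"
  shows "(\<lambda>p. hamproc H X v u (fst p) (snd p)) \<in> borel_measurable (NT T \<Otimes>\<^sub>M M)"
proof -
  have fm: "fst \<in> borel_measurable (NT T \<Otimes>\<^sub>M M)"
    by (rule measurable_compose[OF measurable_fst measurable_restrict_space1])
       (rule measurable_ident_sets, simp)
  have idm: "(\<lambda>p. p) \<in> measurable (NT T \<Otimes>\<^sub>M M) (borel \<Otimes>\<^sub>M M)"
    using fm by (auto simp: measurable_pair_iff o_def)
  have Xm: "(\<lambda>p. X (fst p) (snd p)) \<in> borel_measurable (NT T \<Otimes>\<^sub>M M)"
    using measurable_compose[OF idm X_meas] by (simp add: case_prod_beta')
  have tx: "(\<lambda>p. (fst p, X (fst p) (snd p))) \<in> borel_measurable (NT T \<Otimes>\<^sub>M M)"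
    using fm Xm by (intro borel_measurable_Pair) auto
  have um: "(\<lambda>(t, x). u t x) \<in> borel_measurable borel" using adm by (simp add: admissible_def)
  have g1: "(\<lambda>p. u (fst p) (X (fst p) (snd p))) \<in> borel_measurable (NT T \<Otimes>\<^sub>M M)"
    using measurable_compose[OF tx um] by simp
  have g2: "(\<lambda>p. pgrad v (fst p) (X (fst p) (snd p))) \<in> borel_measurable (NT T \<Otimes>\<^sub>M M)"
    using measurable_compose[OF tx grad_meas] by simp
  have g3: "(\<lambda>p. phess v (fst p) (X (fst p) (snd p))) \<in> borel_measurable (NT T \<Otimes>\<^sub>M M)"
    using measurable_compose[OF tx hess_meas] by simp
  have tup: "(\<lambda>p. (fst p, X (fst p) (snd p), u (fst p) (X (fst p) (snd p)),
       pgrad v (fst p) (X (fst p) (snd p)), phess v (fst p) (X (fst p) (snd p))))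
     \<in> borel_measurable (NT T \<Otimes>\<^sub>M M)"
    using fm Xm g1 g2 g3 by (intro borel_measurable_Pair) auto
  show ?thesis
    using measurable_compose[OF tup H_meas] by (simp add: hamproc_def)
qed

lemma ennreal_pm_inj:
  fixes x y :: real
  assumes "ennreal x = ennreal y" "ennreal (- x) = ennreal (- y)"
  shows "x = y"
  using assms
  by (cases "x \<ge> 0"; cases "y \<ge> 0") (auto simp: ennreal_eq_0_iff ennreal_neg)

theorem lemma3p1:
  fixes M :: "'a measure" and T :: real
    and U :: "(real^'m) set"
    and H :: "real \<Rightarrow> real^'d \<Rightarrow> real^'m \<Rightarrow> real^'d \<Rightarrow> real^'d^'d \<Rightarrow> real"
    and X :: "real \<Rightarrow> 'a \<Rightarrow> real^'d"
    and v :: "real \<Rightarrow> real^'d \<Rightarrow> real"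
  assumes "prob_space M" and "0 < T"
    and X_meas: "(\<lambda>(t, \<omega>). X t \<omega>) \<in> borel_measurable (borel \<Otimes>\<^sub>M M)"
    and H_meas: "(\<lambda>(t, x, \<kappa>, z, p). H t x \<kappa> z p) \<in> borel_measurable borel"
    and v_meas: "(\<lambda>(t, x). v t x) \<in> borel_measurable borel"
    and grad_meas: "(\<lambda>(t, x). pgrad v t x) \<in> borel_measurable borel"
    and hess_meas: "(\<lambda>(t, x). phess v t x) \<in> borel_measurable borel"
    and inf_meas: "(\<lambda>(t, \<omega>). infham H U X v t \<omega>) \<in> borel_measurable (borel \<Otimes>\<^sub>M M)"
    and inf_int: "(\<integral>\<^sup>+ t. indicator {0..T} t *
                     (\<integral>\<^sup>+ \<omega>. e2ennreal \<bar>infham H U X v t \<omega>\<bar> \<partial>M) \<partial>lborel) < \<infinity>"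
    and opt_exists: "\<exists>u. admissible U u \<and>
           (AE p in restrict_space lborel {0..T} \<Otimes>\<^sub>M M.
              ereal (hamproc H X v u (fst p) (snd p)) = infham H U X v (fst p) (snd p))"
  shows "(\<exists>u. admissible U u \<and>
            time_exp_integral M T (hamproc H X v u)
              = (INF ub\<in>{ub. admissible U ub}. time_exp_integral M T (hamproc H X v ub)))
       \<and> (\<forall>u. admissible U u \<and>
            time_exp_integral M T (hamproc H X v u)
              = (INF ub\<in>{ub. admissible U ub}. time_exp_integral M T (hamproc H X v ub))
          \<longrightarrow> (AE p in restrict_space lborel {0..T} \<Otimes>\<^sub>M M.
                 ereal (hamproc H X v u (fst p) (snd p)) = infham H U X v (fst p) (snd p)))"
proof -
  let ?P = "NT T \<Otimes>\<^sub>M M"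
  define A where "A u = Ip M T (\<lambda>t \<omega>. ennreal (hamproc H X v u t \<omega>))" for u
  define B where "B u = Ip M T (\<lambda>t \<omega>. ennreal (- hamproc H X v u t \<omega>))" for u
  have TE: "time_exp_integral M T (hamproc H X v u) = enn2ereal (A u) - enn2ereal (B u)" for u
    by (simp add: time_exp_integral_def A_def B_def Ip_def)
  obtain u0 where adm0: "admissible U u0"
    and ae0: "AE p in ?P. ereal (hamproc H X v u0 (fst p) (snd p)) = infham H U X v (fst p) (snd p)"
    using opt_exists by blast
  have low: "infham H U X v t \<omega> \<le> ereal (hamproc H X v ub t \<omega>)" if "admissible U ub" for ub t \<omega>
    using that unfolding infham_def hamproc_def admissible_def by (auto intro: INF_lower)
  have ge: "AE p in ?P. hamproc H X v u0 (fst p) (snd p) \<le> hamproc H X v ub (fst p) (snd p)"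
    if "admissible U ub" for ub
    using ae0
  proof eventually_elim
    case (elim p)
    then show ?case using low[OF that, of "fst p" "snd p"] by (metis ereal_less_eq(3))
  qed
  have Amono: "A u0 \<le> A ub" if "admissible U ub" for ub
    unfolding A_def using ge[OF that]
    by (intro Ip_mono_AE[OF assms(1)]) (auto elim!: eventually_mono intro: ennreal_leI)
  have Bmono: "B ub \<le> B u0" if "admissible U ub" for ub
    unfolding B_def using ge[OF that]
    by (intro Ip_mono_AE[OF assms(1)]) (auto elim!: eventually_mono intro: ennreal_leI)
  have IPinf: "Ip M T (\<lambda>t \<omega>. e2ennreal \<bar>infham H U X v t \<omega>\<bar>) < \<infinity>"
    using inf_int by (simp add: Ip_def)
  have A0fin: "A u0 < \<infinity>"
  proof -
    have "A u0 \<le> Ip M T (\<lambda>t \<omega>. e2ennreal \<bar>infham H U X v t \<omega>\<bar>)"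
      unfolding A_def using ae0
      by (intro Ip_mono_AE[OF assms(1)]) (auto elim!: eventually_mono intro: ennreal_leI simp: eq_commute[of "ereal _"])
    then show ?thesis using IPinf by (meson le_less_trans)
  qed
  have B0fin: "B u0 < \<infinity>"
  proof -
    have "B u0 \<le> Ip M T (\<lambda>t \<omega>. e2ennreal \<bar>infham H U X v t \<omega>\<bar>)"
      unfolding B_def using ae0
      by (intro Ip_mono_AE[OF assms(1)]) (auto elim!: eventually_mono intro: ennreal_leI simp: eq_commute[of "ereal _"])
    then show ?thesis using IPinf by (meson le_less_trans)
  qed
  have TEmono: "time_exp_integral M T (hamproc H X v u0) \<le> time_exp_integral M T (hamproc H X v ub)"
    if "admissible U ub" for ub
    unfolding TE using Amono[OF that] Bmono[OF that]
    by (intro ereal_minus_mono) (simp_all add: less_eq_ennreal.rep_eq[symmetric])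
  have opt0: "time_exp_integral M T (hamproc H X v u0)
      = (INF ub\<in>{ub. admissible U ub}. time_exp_integral M T (hamproc H X v ub))"
    using adm0 TEmono by (intro order.antisym INF_greatest INF_lower) auto
  have part2: "AE p in ?P. ereal (hamproc H X v u (fst p) (snd p)) = infham H U X v (fst p) (snd p)"
    if adm: "admissible U u" and equ: "time_exp_integral M T (hamproc H X v u)
              = (INF ub\<in>{ub. admissible U ub}. time_exp_integral M T (hamproc H X v ub))" for u
  proof -
    have "time_exp_integral M T (hamproc H X v u) \<le> time_exp_integral M T (hamproc H X v u0)"
      unfolding equ using adm0 by (intro INF_lower) auto
    then have "time_exp_integral M T (hamproc H X v u) = time_exp_integral M T (hamproc H X v u0)"
      using TEmono[OF adm] by simp
    then have AB: "A u = A u0 \<and> B u = B u0"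
      using Amono[OF adm] Bmono[OF adm] A0fin B0fin unfolding TE
      by (intro ennreal_arith) auto
    have hm: "(\<lambda>p. hamproc H X v w (fst p) (snd p)) \<in> borel_measurable ?P" if "admissible U w" for w
      by (rule ham_meas[OF X_meas H_meas grad_meas hess_meas that])
    have m1: "(\<lambda>p. ennreal (hamproc H X v w (fst p) (snd p))) \<in> borel_measurable ?P"
      if "admissible U w" for w
      using measurable_compose[OF hm[OF that] measurable_ennreal] by simp
    have m2: "(\<lambda>p. ennreal (- hamproc H X v w (fst p) (snd p))) \<in> borel_measurable ?P"
      if "admissible U w" for w
      using measurable_compose[OF borel_measurable_uminus[OF hm[OF that]] measurable_ennreal] by simp
    have e1: "AE p in ?P. ennreal (hamproc H X v u (fst p) (snd p)) = ennreal (hamproc H X v u0 (fst p) (snd p))"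
    proof (rule ae_eq_from_int[OF m1[OF adm] m1[OF adm0]])
      show "integral\<^sup>N ?P (\<lambda>p. ennreal (hamproc H X v u (fst p) (snd p)))
          = integral\<^sup>N ?P (\<lambda>p. ennreal (hamproc H X v u0 (fst p) (snd p)))"
        using AB Ip_prod[OF assms(1) m1[OF adm]] Ip_prod[OF assms(1) m1[OF adm0]]
        by (simp add: A_def)
      show "integral\<^sup>N ?P (\<lambda>p. ennreal (hamproc H X v u0 (fst p) (snd p))) \<noteq> \<infinity>"
        using A0fin Ip_prod[OF assms(1) m1[OF adm0]] by (simp add: A_def)
      show "AE p in ?P. ennreal (hamproc H X v u0 (fst p) (snd p)) \<le> ennreal (hamproc H X v u (fst p) (snd p))"
        using ge[OF adm] by (auto elim!: eventually_mono intro: ennreal_leI)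
    qed
    have e2: "AE p in ?P. ennreal (- hamproc H X v u0 (fst p) (snd p)) = ennreal (- hamproc H X v u (fst p) (snd p))"
    proof (rule ae_eq_from_int[OF m2[OF adm0] m2[OF adm]])
      show "integral\<^sup>N ?P (\<lambda>p. ennreal (- hamproc H X v u0 (fst p) (snd p)))
          = integral\<^sup>N ?P (\<lambda>p. ennreal (- hamproc H X v u (fst p) (snd p)))"
        using AB Ip_prod[OF assms(1) m2[OF adm]] Ip_prod[OF assms(1) m2[OF adm0]]
        by (simp add: B_def)
      show "integral\<^sup>N ?P (\<lambda>p. ennreal (- hamproc H X v u (fst p) (snd p))) \<noteq> \<infinity>"
        using AB B0fin Ip_prod[OF assms(1) m2[OF adm]] by (simp add: B_def)
      show "AE p in ?P. ennreal (- hamproc H X v u (fst p) (snd p)) \<le> ennreal (- hamproc H X v u0 (fst p) (snd p))"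
        using ge[OF adm] by (auto elim!: eventually_mono intro: ennreal_leI)
    qed
    from e1 e2 ae0 show ?thesis
    proof eventually_elim
      case (elim p)
      then show ?case using ennreal_pm_inj by (metis (no_types, lifting))
    qed
  qed
  show ?thesis using opt0 adm0 part2 by blast
qed

end
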